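(* Let $\Gamma=(V,\nu,\mu)$ be a fuzzy graph on $n$ vertices with maximum fuzzy degree $\Delta$ and minimum fuzzy degree $\delta$. Then $$\sigma^*(\Gamma)\le 2n+\frac{(\Delta-\delta)^2}{4}.$$
   Context: A fuzzy graph $\Gamma=(V,\nu,\mu)$ consists of a finite vertex set $V$ with $|V|=n\ge1$, a map $\nu:V\to[0,1]$, and a symmetric map $\mu:V\times V\to[0,1]$ with $\mu(u,v)\le\min(\nu(u),\nu(v))$. The fuzzy degree is $d_\Gamma(v)=\sum_{u\ne v}\mu(v,u)$, the fuzzy size is $\mathrm{ew}(\Gamma)=\frac12\sum_v d_\Gamma(v)$, $\lambda=2\,\mathrm{ew}(\Gamma)/n$, and the fuzzy sigma index is $\sigma^*(\Gamma)=\frac1n\sum_{v}(d_\Gamma(v)-\lambda)^2$. $\Delta=\max_v d_\Gamma(v)$, $\delta=\min_v d_\Gamma(v)$. *)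

theory Defs
  imports Complex_Main
begin

definition fuzzy_graph :: "'a set \<Rightarrow> ('a \<Rightarrow> real) \<Rightarrow> ('a \<Rightarrow> 'a \<Rightarrow> real) \<Rightarrow> bool" where
  "fuzzy_graph V \<nu> \<mu> \<longleftrightarrow> finite V \<and> V \<noteq> {} \<and>
     (\<forall>v\<in>V. 0 \<le> \<nu> v \<and> \<nu> v \<le> 1) \<and>
     (\<forall>u\<in>V. \<forall>v\<in>V. 0 \<le> \<mu> u v \<and> \<mu> u v \<le> 1 \<and> \<mu> u v = \<mu> v u \<and>
        \<mu> u v \<le> min (\<nu> u) (\<nu> v))"

definition fuzzy_degree :: "'a set \<Rightarrow> ('a \<Rightarrow> 'a \<Rightarrow> real) \<Rightarrow> 'a \<Rightarrow> real" where
  "fuzzy_degree V \<mu> v = (\<Sum>u\<in>V - {v}. \<mu> v u)"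

definition fuzzy_size :: "'a set \<Rightarrow> ('a \<Rightarrow> 'a \<Rightarrow> real) \<Rightarrow> real" where
  "fuzzy_size V \<mu> = (\<Sum>v\<in>V. fuzzy_degree V \<mu> v) / 2"

definition fuzzy_lambda :: "'a set \<Rightarrow> ('a \<Rightarrow> 'a \<Rightarrow> real) \<Rightarrow> real" where
  "fuzzy_lambda V \<mu> = 2 * fuzzy_size V \<mu> / real (card V)"

definition fuzzy_sigma :: "'a set \<Rightarrow> ('a \<Rightarrow> 'a \<Rightarrow> real) \<Rightarrow> real" where
  "fuzzy_sigma V \<mu> = (\<Sum>v\<in>V. (fuzzy_degree V \<mu> v - fuzzy_lambda V \<mu>)^2) / real (card V)"

definition fuzzy_max_degree :: "'a set \<Rightarrow> ('a \<Rightarrow> 'a \<Rightarrow> real) \<Rightarrow> real" where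
  "fuzzy_max_degree V \<mu> = Max (fuzzy_degree V \<mu> ` V)"

definition fuzzy_min_degree :: "'a set \<Rightarrow> ('a \<Rightarrow> 'a \<Rightarrow> real) \<Rightarrow> real" where
  "fuzzy_min_degree V \<mu> = Min (fuzzy_degree V \<mu> ` V)"

end

theory Submission
  imports Defs
begin

theorem proposition2p7:
  fixes V :: "'a set" and \<nu> :: "'a \<Rightarrow> real" and \<mu> :: "'a \<Rightarrow> 'a \<Rightarrow> real"
  assumes "fuzzy_graph V \<nu> \<mu>"
  shows "fuzzy_sigma V \<mu> \<le> 2 * real (card V)
           + (fuzzy_max_degree V \<mu> - fuzzy_min_degree V \<mu>)^2 / 4"
proof -
  define d where "d = fuzzy_degree V \<mu>"
  define n where "n = real (card V)"
  define l where "l = fuzzy_lambda V \<mu>"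
  define M where "M = fuzzy_max_degree V \<mu>"
  define m where "m = fuzzy_min_degree V \<mu>"
  define c where "c = (M + m) / 2"
  have fin: "finite V" and ne: "V \<noteq> {}" using assms by (auto simp: fuzzy_graph_def)
  have npos: "n > 0" using fin ne by (simp add: n_def card_gt_0_iff)
  have l_eq: "l = (\<Sum>v\<in>V. d v) / n"
    by (simp add: l_def fuzzy_lambda_def fuzzy_size_def d_def n_def)
  have Md: "d v \<le> M" "m \<le> d v" if "v \<in> V" for v
    using that fin by (auto simp: M_def m_def d_def fuzzy_max_degree_def fuzzy_min_degree_def)
  have s0: "(\<Sum>v\<in>V. d v - l) = 0"
    using npos by (simp add: sum_subtractf l_eq n_def)
  have "(\<Sum>v\<in>V. (d v - c)^2) = (\<Sum>v\<in>V. (d v - l)^2 + 2*(l-c)*(d v - l) + (l-c)^2)"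
    by (rule sum.cong) (auto simp: power2_eq_square algebra_simps)
  also have "\<dots> = (\<Sum>v\<in>V. (d v - l)^2) + 2*(l-c)*(\<Sum>v\<in>V. d v - l) + n*(l-c)^2"
    by (simp add: sum.distrib sum_distrib_left n_def)
  finally have eq: "(\<Sum>v\<in>V. (d v - c)^2) = (\<Sum>v\<in>V. (d v - l)^2) + n*(l-c)^2"
    using s0 by simp
  have b: "(d v - c)^2 \<le> ((M - m)/2)^2" if "v \<in> V" for v
  proof -
    have "\<bar>d v - c\<bar> \<le> \<bar>(M-m)/2\<bar>" using Md[OF that] unfolding c_def by (simp add: abs_le_iff field_simps)
    then show ?thesis by (metis abs_le_square_iff)
  qed
  have "(\<Sum>v\<in>V. (d v - l)^2) \<le> (\<Sum>v\<in>V. (d v - c)^2)"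
    using eq npos by (simp add: zero_le_mult_iff)
  also have "\<dots> \<le> (\<Sum>v\<in>V. ((M - m)/2)^2)" by (rule sum_mono) (rule b)
  also have "\<dots> = n * ((M-m)/2)^2" by (simp add: n_def)
  finally have "(\<Sum>v\<in>V. (d v - l)^2) / n \<le> ((M-m)/2)^2"
    using npos by (simp add: divide_le_eq mult.commute)
  then have "fuzzy_sigma V \<mu> \<le> (M-m)^2/4"
    by (simp add: fuzzy_sigma_def d_def l_def n_def power_divide)
  then show ?thesis using npos unfolding M_def m_def n_def by simp
qed

end
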